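(* Let $\mathfrak S$ be a commutative semiring with multiplicative identity $1$ whose Jacobson radical (the intersection of all maximal ideals) is the zero ideal. Let $\sigma_{\mathfrak S}$ be a set of ideals of $\mathfrak S$ containing all maximal ideals of $\mathfrak S$, endowed with the ideal topology, and let $\mathcal S=\{\mathfrak a^{\uparrow}\mid \mathfrak a \text{ an ideal of }\mathfrak S\}$ be its subbase of closed sets. If $\mathcal S$ strongly disconnects $\sigma_{\mathfrak S}$, then $\mathfrak S$ has a non-trivial idempotent element, i.e. some $e\in\mathfrak S$ with $e^2=e$, $e\neq0$, $e\neq1$.
   Context: A semiring $(\mathfrak S,+,0,\cdot,1)$ has $(\mathfrak S,+,0)$ a commutative monoid, $(\mathfrak S,\cdot,1)$ a monoid, $0r=r0=0$, and two-sided distributivity; all semirings are commutative. An ideal is a nonempty proper subset closed under addition and under multiplication by elements of $\mathfrak S$; maximal means not properly contained in another ideal. For an ideal $\mathfrak a$, $\mathfrak a^{\uparrow}=\{\mathfrak x\in\sigma_{\mathfrak S}\mid\mathfrak a\subseteq\mathfrak x\}$; the ideal topology has these sets as a subbasis of closed sets. A closed subbase $\mathcal S$ of a space $X$ strongly disconnects $X$ if there exist non-empty $A,B\in\mathcal S$ with $X=A\cup B$ and $A\cap B=\emptyset$. *)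

theory Defs
  imports Main
begin

definition sr_ideal :: "'a::comm_semiring_1 set \<Rightarrow> bool" where
  "sr_ideal I \<longleftrightarrow> I \<noteq> {} \<and> I \<noteq> UNIV \<and>
     (\<forall>a\<in>I. \<forall>b\<in>I. a + b \<in> I) \<and> (\<forall>r. \<forall>a\<in>I. r * a \<in> I)"

definition sr_maximal_ideal :: "'a::comm_semiring_1 set \<Rightarrow> bool" where
  "sr_maximal_ideal M \<longleftrightarrow> sr_ideal M \<and> (\<forall>J. sr_ideal J \<and> M \<subseteq> J \<longrightarrow> J = M)"

definition jacobson_radical :: "'a::comm_semiring_1 set" where
  "jacobson_radical = \<Inter> {M. sr_maximal_ideal M}"

definition up_set :: "'a set set \<Rightarrow> 'a set \<Rightarrow> 'a set set" where
  "up_set \<sigma> a = {x \<in> \<sigma>. a \<subseteq> x}"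

definition ideal_subbase :: "'a::comm_semiring_1 set set \<Rightarrow> 'a set set set" where
  "ideal_subbase \<sigma> = {up_set \<sigma> a | a. sr_ideal a}"

definition strongly_disconnects :: "'b set set \<Rightarrow> 'b set \<Rightarrow> bool" where
  "strongly_disconnects S X \<longleftrightarrow>
     (\<exists>A\<in>S. \<exists>B\<in>S. A \<noteq> {} \<and> B \<noteq> {} \<and> X = A \<union> B \<and> A \<inter> B = {})"

end

theory Submission
  imports Defs
begin

lemma one_notin_ideal:
  assumes "sr_ideal (I::'a::comm_semiring_1 set)" shows "1 \<notin> I"
proof
  assume "1 \<in> I"
  then have "\<forall>r. r \<in> I" using assms unfolding sr_ideal_def by (metis mult.right_neutral)
  then show False using assms unfolding sr_ideal_def by auto
qed

lemma ideal_zero: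
  assumes "sr_ideal (I::'a::comm_semiring_1 set)" shows "0 \<in> I"
  using assms unfolding sr_ideal_def by (metis ex_in_conv mult_zero_left)

lemma ideal_in_maximal:
  assumes "sr_ideal (J::'a::comm_semiring_1 set)"
  shows "\<exists>M. sr_maximal_ideal M \<and> J \<subseteq> M"
proof -
  let ?A = "{I. sr_ideal I \<and> J \<subseteq> I}"
  have "\<exists>M\<in>?A. \<forall>X\<in>?A. M \<subseteq> X \<longrightarrow> X = M"
  proof (rule subset_Zorn_nonempty)
    show "?A \<noteq> {}" using assms by blast
  next
    fix C assume C: "C \<noteq> {}" "subset.chain ?A C"
    have sub: "C \<subseteq> ?A" using C(2) unfolding subset.chain_def by blast
    have ch: "\<forall>X\<in>C. \<forall>Y\<in>C. X \<subseteq> Y \<or> Y \<subseteq> X"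
      using C(2) unfolding subset.chain_def by blast
    have "1 \<notin> \<Union>C" using sub one_notin_ideal by blast
    then have ne: "\<Union>C \<noteq> UNIV" by auto
    have nz: "\<Union>C \<noteq> {}" using C(1) sub assms unfolding sr_ideal_def by blast
    have add: "\<forall>a\<in>\<Union>C. \<forall>b\<in>\<Union>C. a + b \<in> \<Union>C"
    proof (intro ballI)
      fix a b assume "a \<in> \<Union>C" "b \<in> \<Union>C"
      then obtain X Y where XY: "X \<in> C" "Y \<in> C" "a \<in> X" "b \<in> Y" by blast
      show "a + b \<in> \<Union>C"
      proof (cases "X \<subseteq> Y")
        case True
        then show ?thesis using XY sub unfolding sr_ideal_def by blast
      next
        case False
        then have "Y \<subseteq> X" using ch XY by blast
        then show ?thesis using XY sub unfolding sr_ideal_def by blast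
      qed
    qed
    have mul: "\<forall>r. \<forall>a\<in>\<Union>C. r * a \<in> \<Union>C"
      using sub unfolding sr_ideal_def by blast
    have "J \<subseteq> \<Union>C" using C(1) sub by blast
    then show "\<Union>C \<in> ?A" using ne nz add mul unfolding sr_ideal_def by blast
  qed
  then obtain M where M: "M \<in> ?A" "\<forall>X\<in>?A. M \<subseteq> X \<longrightarrow> X = M" by blast
  have "sr_maximal_ideal M" unfolding sr_maximal_ideal_def
    using M by (metis (mono_tags, lifting) mem_Collect_eq order_trans)
  then show ?thesis using M by blast
qed

theorem proposition3p11:
  fixes \<sigma> :: "'a::comm_semiring_1 set set"
  assumes "jacobson_radical = ({0} :: 'a set)"
    and "\<forall>I\<in>\<sigma>. sr_ideal I"
    and "{M. sr_maximal_ideal M} \<subseteq> \<sigma>"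
    and "strongly_disconnects (ideal_subbase \<sigma>) \<sigma>"
  shows "\<exists>e::'a. e * e = e \<and> e \<noteq> 0 \<and> e \<noteq> 1"
proof -
  obtain a b where ia: "sr_ideal a" and ib: "sr_ideal b"
    and cov: "\<sigma> = up_set \<sigma> a \<union> up_set \<sigma> b" and dis: "up_set \<sigma> a \<inter> up_set \<sigma> b = {}"
    using assms(4) unfolding strongly_disconnects_def ideal_subbase_def by blast
  have maxab: "a \<subseteq> M \<or> b \<subseteq> M" if "sr_maximal_ideal M" for M
    using that assms(3) cov unfolding up_set_def by blast
  have notboth: "\<not> (a \<subseteq> M \<and> b \<subseteq> M)" if "sr_maximal_ideal M" for M
    using that assms(3) dis unfolding up_set_def by blast
  define S where "S = {x + y | x y. x \<in> a \<and> y \<in> b}"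
  have "1 \<in> S"
  proof (rule ccontr)
    assume n1: "1 \<notin> S"
    have "sr_ideal S" unfolding sr_ideal_def
    proof (intro conjI)
      show "S \<noteq> {}" using ideal_zero[OF ia] ideal_zero[OF ib] unfolding S_def by blast
      show "S \<noteq> UNIV" using n1 by auto
      show "\<forall>u\<in>S. \<forall>v\<in>S. u + v \<in> S"
      proof (intro ballI)
        fix u v assume "u \<in> S" "v \<in> S"
        then obtain x y x' y' where "u = x + y" "v = x' + y'" "x \<in> a" "y \<in> b" "x' \<in> a" "y' \<in> b"
          unfolding S_def by blast
        moreover have "u + v = (x + x') + (y + y')" using calculation by (simp add: ac_simps)
        ultimately show "u + v \<in> S" using ia ib unfolding S_def sr_ideal_def by blast
      qed
      show "\<forall>r. \<forall>u\<in>S. r * u \<in> S"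
      proof (intro allI ballI)
        fix r u assume "u \<in> S"
        then obtain x y where "u = x + y" "x \<in> a" "y \<in> b" unfolding S_def by blast
        moreover have "r * u = r * x + r * y" using calculation by (simp add: distrib_left)
        ultimately show "r * u \<in> S" using ia ib unfolding S_def sr_ideal_def by blast
      qed
    qed
    then obtain M where M: "sr_maximal_ideal M" "S \<subseteq> M" using ideal_in_maximal by blast
    have "a \<subseteq> S"
    proof
      fix x assume "x \<in> a" then have "x + 0 \<in> S" using ideal_zero[OF ib] unfolding S_def by blast
      then show "x \<in> S" by simp
    qed
    moreover have "b \<subseteq> S"
    proof
      fix y assume "y \<in> b" then have "0 + y \<in> S" using ideal_zero[OF ia] unfolding S_def by blast
      then show "y \<in> S" by simp
    qed
    ultimately show False using notboth[OF M(1)] M(2) by blast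
  qed
  then obtain x y where xy: "1 = x + y" "x \<in> a" "y \<in> b" unfolding S_def by blast
  have "x * y \<in> a" using xy ia unfolding sr_ideal_def by (metis mult.commute)
  moreover have "x * y \<in> b" using xy ib unfolding sr_ideal_def by blast
  ultimately have "x * y \<in> jacobson_radical" unfolding jacobson_radical_def using maxab by blast
  then have xy0: "x * y = 0" using assms(1) by (metis singletonD)
  have "x = x * (x + y)" using xy(1) by simp
  also have "\<dots> = x * x" using xy0 by (simp add: distrib_left)
  finally have idem: "x * x = x" by simp
  have "x \<noteq> 0" using xy one_notin_ideal[OF ib] by auto
  moreover have "x \<noteq> 1" using xy one_notin_ideal[OF ia] by auto
  ultimately show ?thesis using idem by blast
qed

end
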